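(* Let $\mathbb G$ be a symmetric directed graph on $m$ vertices (no self-arcs) with arcs enumerated $e_1,\dots,e_d$, each carrying a real matrix $C_{e_k}$ with $n$ columns, and let $C=\operatorname{blockdiag}(C_{e_1},\dots,C_{e_d})$. Let $\mathbb G_1,\dots,\mathbb G_p$ be symmetric spanning subgraphs of $\mathbb G$ whose union is $\mathbb G$. Let $J$ be the incidence matrix of $\mathbb G$, $J_i$ the spanning incidence matrix of $\mathbb G_i$, and $W_i$ the spanning weight matrix of $\mathbb G_i$; set $\bar J=J\otimes I_n$, $\bar J_i=J_i\otimes I_n$, $\bar W_i=W_i\otimes I_n$. Then $$\ker\big(C\bar J'\big)=\ker\Big(C\sum_{i=1}^p\bar W_i^{1/2}\bar J_i'\Big).$$
   Context: A directed graph is symmetric if whenever $(i,j)$ is an arc so is $(j,i)$. Incidence matrix $J\in\mathbb R^{m\times d}$: column $k$ has $+1$ in row $i$ and $-1$ in row $j$ when $e_k=(j,i)$. Spanning incidence matrix of a spanning subgraph $\mathbb H$: same as $J$ except that column $k$ is zero when $e_k$ is not an arc of $\mathbb H$. Spanning weight matrix of a symmetric spanning subgraph $\mathbb H$: the $d\times d$ diagonal matrix whose $k$th diagonal entry is $1/(1+\max\{\bar d_i,\bar d_j\})$ if $e_k=(j,i)$ is an arc of $\mathbb H$ (with $\bar d_v$ the number of neighbors of $v$ in $\mathbb H$), and $0$ otherwise. $'$ denotes transpose. *)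

theory Defs
  imports "Jordan_Normal_Form.Matrix_Kernel"
begin

text \<open>Vertices are 0..<m; the arcs e_1,...,e_d of G are the entries es!0, ..., es!(d-1)
  of a list es; an arc (j,i) goes from j to i.  A spanning subgraph H is given by its arc set.\<close>

definition incidence_mat :: "nat \<Rightarrow> (nat \<times> nat) list \<Rightarrow> real mat" where
  "incidence_mat m es = mat m (length es)
     (\<lambda>(v,k). if v = snd (es!k) then 1 else if v = fst (es!k) then -1 else 0)"

definition span_incidence_mat :: "nat \<Rightarrow> (nat \<times> nat) list \<Rightarrow> (nat \<times> nat) set \<Rightarrow> real mat" where
  "span_incidence_mat m es H = mat m (length es)
     (\<lambda>(v,k). if es!k \<in> H then
                (if v = snd (es!k) then 1 else if v = fst (es!k) then -1 else 0)
              else 0)"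

definition nbr_count :: "(nat \<times> nat) set \<Rightarrow> nat \<Rightarrow> nat" where
  "nbr_count H v = card {u. (u, v) \<in> H}"

definition span_weight_mat :: "(nat \<times> nat) list \<Rightarrow> (nat \<times> nat) set \<Rightarrow> real mat" where
  "span_weight_mat es H = mat (length es) (length es)
     (\<lambda>(k,l). if k = l \<and> es!k \<in> H then
                1 / (1 + real (max (nbr_count H (snd (es!k))) (nbr_count H (fst (es!k)))))
              else 0)"

definition kron :: "real mat \<Rightarrow> real mat \<Rightarrow> real mat" where
  "kron A B = mat (dim_row A * dim_row B) (dim_col A * dim_col B)
     (\<lambda>(r,c). A $$ (r div dim_row B, c div dim_col B) * B $$ (r mod dim_row B, c mod dim_col B))"

text \<open>Square root of a diagonal matrix with nonnegative diagonal (its unique PSD square root).\<close>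
definition diag_sqrt :: "real mat \<Rightarrow> real mat" where
  "diag_sqrt W = mat (dim_row W) (dim_col W) (\<lambda>(k,l). if k = l then sqrt (W $$ (k,k)) else 0)"

definition mat_sum_list :: "nat \<Rightarrow> nat \<Rightarrow> real mat list \<Rightarrow> real mat" where
  "mat_sum_list r c As = foldr (+) As (0\<^sub>m r c)"

end

theory Submission imports Defs begin


lemma diag_block_mult:
  assumes "length As = length Bs" "\<forall>i<length As. dim_col (As!i) = dim_row (Bs!i)"
  shows "diag_block_mat As * diag_block_mat Bs = diag_block_mat (map2 (*) As Bs)"
  using assms
proof (induct As arbitrary: Bs)
  case Nil thus ?case by auto
next
  case (Cons A As Bs)
  then obtain B Bs' where Bs: "Bs = B # Bs'" by (cases Bs) auto
  have len: "length As = length Bs'" and dims: "\<forall>i<length As. dim_col (As!i) = dim_row (Bs'!i)"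
    and AB: "dim_col A = dim_row B" using Cons(2,3) Bs by force+
  have IH: "diag_block_mat As * diag_block_mat Bs' = diag_block_mat (map2 (*) As Bs')"
    using Cons(1)[OF len dims] .
  have dc: "dim_col (diag_block_mat As) = dim_row (diag_block_mat Bs')"
  proof -
    have "map dim_col As = map dim_row Bs'" using len dims by (intro nth_equalityI) auto
    thus ?thesis unfolding dim_diag_block_mat by simp
  qed
  let ?DA = "diag_block_mat As" and ?DB = "diag_block_mat Bs'"
  have m: "four_block_mat A (0\<^sub>m (dim_row A) (dim_col ?DA)) (0\<^sub>m (dim_row ?DA) (dim_col A)) ?DA *
    four_block_mat B (0\<^sub>m (dim_row B) (dim_col ?DB)) (0\<^sub>m (dim_row ?DB) (dim_col B)) ?DB
   = four_block_mat (A * B + 0\<^sub>m (dim_row A) (dim_col ?DA) * 0\<^sub>m (dim_row ?DB) (dim_col B))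
      (A * 0\<^sub>m (dim_row B) (dim_col ?DB) + 0\<^sub>m (dim_row A) (dim_col ?DA) * ?DB)
      (0\<^sub>m (dim_row ?DA) (dim_col A) * B + ?DA * 0\<^sub>m (dim_row ?DB) (dim_col B))
      (0\<^sub>m (dim_row ?DA) (dim_col A) * 0\<^sub>m (dim_row B) (dim_col ?DB) + ?DA * ?DB)"
    by (rule mult_four_block_mat) (use AB dc in auto)
  have z1: "map (dim_col \<circ> (\<lambda>(x, y). x * y)) (zip As Bs') = map dim_col Bs'"
    using len by (intro nth_equalityI) auto
  have z2: "map (dim_row \<circ> (\<lambda>(x, y). x * y)) (zip As Bs') = map dim_row As"
    using len by (intro nth_equalityI) auto
  have e1: "A * B + 0\<^sub>m (dim_row A) (dim_col B) = A * B"
    by (rule right_add_zero_mat) auto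
  have e2: "0\<^sub>m (dim_row ?DA) (dim_col ?DB) + ?DA * ?DB = ?DA * ?DB"
    by (rule left_add_zero_mat) auto
  show ?case unfolding Bs diag_block_mat.simps Let_def m
    using AB dc IH e1 e2 by (auto simp: dim_diag_block_mat z1 z2)
qed



lemma diag_scal: fixes xs :: "real list" shows
  "diag_block_mat (map (\<lambda>x. x \<cdot>\<^sub>m 1\<^sub>m n) xs) =
   mat (length xs * n) (length xs * n) (\<lambda>(i,j). if i = j then xs!(i div n) else 0)"
proof (induct xs)
  case Nil thus ?case by (auto intro!: eq_matI)
next
  case (Cons x xs)
  show ?case
  proof (rule eq_matI)
    fix i j assume i: "i < dim_row (mat (length (x#xs) * n) (length (x#xs) * n) (\<lambda>(i,j). if i = j then (x#xs)!(i div n) else 0))"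
      and j: "j < dim_col (mat (length (x#xs) * n) (length (x#xs) * n) (\<lambda>(i,j). if i = j then (x#xs)!(i div n) else 0))"
    hence i': "i < n + length xs * n" and j': "j < n + length xs * n" by auto
    have dd: "i - n = j - n \<longleftrightarrow> i = j" if "n \<le> i" "n \<le> j" using that by auto
    have dv: "(x#xs) ! (i div n) = xs ! ((i - n) div n)" if "n \<le> i" 
    proof -
      have np: "n > 0" using that i' by (cases n) auto
      define k where "k = i - n"
      have k: "i = n + k" using that k_def by simp
      have "i div n = Suc (k div n)" using np k by simp
      thus ?thesis using k by simp
    qed
    let ?D = "diag_block_mat (map (\<lambda>x. x \<cdot>\<^sub>m 1\<^sub>m n) xs)"
    have dD: "dim_row ?D = length xs * n" "dim_col ?D = length xs * n" by (auto simp: Cons)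
    have "diag_block_mat (map (\<lambda>x. x \<cdot>\<^sub>m 1\<^sub>m n) (x # xs)) $$ (i, j) =
      (if i < n then if j < n then (x \<cdot>\<^sub>m 1\<^sub>m n) $$ (i,j) else 0
       else if j < n then 0 else ?D $$ (i - n, j - n))"
      unfolding list.map diag_block_mat.simps Let_def
      by (subst index_mat_four_block(1)) (use i' j' dD in auto)
    also have "\<dots> = (if i = j then (x#xs)!(i div n) else 0)"
    proof (cases "i < n")
      case True thus ?thesis using j' by (cases "j < n") auto
    next
      case False
      show ?thesis
      proof (cases "j < n")
        case True thus ?thesis using False by auto
      next
        case F2: False
        have "?D $$ (i - n, j - n) = (if i - n = j - n then xs!((i-n) div n) else 0)"
          unfolding Cons using i' j' False F2 by simp
        thus ?thesis using False F2 dd dv by auto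
      qed
    qed
    finally show "diag_block_mat (map (\<lambda>x. x \<cdot>\<^sub>m 1\<^sub>m n) (x # xs)) $$ (i, j) =
         mat (length (x#xs) * n) (length (x#xs) * n) (\<lambda>(i,j). if i = j then (x#xs)!(i div n) else 0) $$ (i, j)"
      using i' j' by simp
  qed (auto simp: Let_def dim_diag_block_mat sum_list_triv o_def)
qed

lemma map2_map_same: "map2 f (map g xs) (map h xs) = map (\<lambda>x. f (g x) (h x)) xs"
  by (induct xs) auto

lemma mat_sum_list_carrier:
  assumes "\<forall>A \<in> set As. A \<in> carrier_mat r c"
  shows "mat_sum_list r c As \<in> carrier_mat r c"
  using assms unfolding mat_sum_list_def by (induct As) auto

lemma mat_sum_list_index:
  assumes "\<forall>A \<in> set As. A \<in> carrier_mat r c" "i < r" "j < c"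
  shows "mat_sum_list r c As $$ (i,j) = sum_list (map (\<lambda>A. A $$ (i,j)) As)"
    and "mat_sum_list r c As \<in> carrier_mat r c"
proof -
  have "mat_sum_list r c As \<in> carrier_mat r c" using assms(1)
    unfolding mat_sum_list_def by (induct As) auto
  moreover have "mat_sum_list r c As $$ (i,j) = sum_list (map (\<lambda>A. A $$ (i,j)) As)" using assms
  proof (induct As)
    case Nil thus ?case by (simp add: mat_sum_list_def)
  next
    case (Cons A As)
    have c: "foldr (+) As (0\<^sub>m r c) \<in> carrier_mat r c" using Cons(2)
      by (induct As) auto
    show ?case using Cons c unfolding mat_sum_list_def by auto
  qed
  ultimately show "mat_sum_list r c As $$ (i,j) = sum_list (map (\<lambda>A. A $$ (i,j)) As)"
    "mat_sum_list r c As \<in> carrier_mat r c" by auto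
qed

lemma kernel_inv:
  assumes M: "M \<in> carrier_mat R c" and D: "D \<in> carrier_mat R R" and D': "D' \<in> carrier_mat R R"
    and inv: "D' * D = 1\<^sub>m R"
  shows "mat_kernel (D * M) = mat_kernel M"
proof -
  have "v \<in> mat_kernel (D * M) \<longleftrightarrow> v \<in> mat_kernel M" for v
  proof
    assume v: "v \<in> mat_kernel (D * M)"
    hence vc: "v \<in> carrier_vec c" and e: "(D * M) *\<^sub>v v = 0\<^sub>v R" using M D unfolding mat_kernel_def by auto
    have "M *\<^sub>v v = (D' * D) *\<^sub>v (M *\<^sub>v v)" using inv M vc by auto
    also have "\<dots> = D' *\<^sub>v ((D * M) *\<^sub>v v)" using M D D' vc
      by (simp add: assoc_mult_mat_vec)
    also have "\<dots> = 0\<^sub>v R" using e D' by auto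
    finally show "v \<in> mat_kernel M" using vc M unfolding mat_kernel_def by auto
  next
    assume v: "v \<in> mat_kernel M"
    hence vc: "v \<in> carrier_vec c" and e: "M *\<^sub>v v = 0\<^sub>v R" using M unfolding mat_kernel_def by auto
    have "(D * M) *\<^sub>v v = D *\<^sub>v (M *\<^sub>v v)" using M D vc by (simp add: assoc_mult_mat_vec)
    also have "\<dots> = 0\<^sub>v R" using e D by auto
    finally show "v \<in> mat_kernel (D * M)" using vc M D unfolding mat_kernel_def by auto
  qed
  thus ?thesis by auto
qed



lemma term_entry:
  assumes i: "i < length es * n" and j: "j < m * n"
  shows "(diag_sqrt (kron (span_weight_mat es H) (1\<^sub>m n)) * transpose_mat (kron (span_incidence_mat m es H) (1\<^sub>m n))) $$ (i,j)
    = sqrt (span_weight_mat es H $$ (i div n, i div n)) * transpose_mat (kron (incidence_mat m es) (1\<^sub>m n)) $$ (i,j)"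
proof -
  let ?d = "length es"
  have np: "n > 0" using i by (cases n) auto
  have k: "i div n < ?d" using i by (simp add: less_mult_imp_div_less)
  have v: "j div n < m" using j by (simp add: less_mult_imp_div_less)
  have im: "i mod n < n" "j mod n < n" using np by auto
  let ?D = "diag_sqrt (kron (span_weight_mat es H) (1\<^sub>m n))"
  let ?B = "transpose_mat (kron (span_incidence_mat m es H) (1\<^sub>m n))"
  have dD: "dim_row ?D = ?d * n" "dim_col ?D = ?d * n"
    by (simp_all add: diag_sqrt_def kron_def span_weight_mat_def)
  have dB: "dim_row ?B = ?d * n" "dim_col ?B = m * n"
    by (simp_all add: kron_def span_incidence_mat_def)
  have De: "?D $$ (i,l) = (if i = l then sqrt (span_weight_mat es H $$ (i div n, i div n)) else 0)" if "l < ?d * n" for l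
    using i that np k im by (simp add: diag_sqrt_def kron_def span_weight_mat_def)
  have "(?D * ?B) $$ (i,j) = (\<Sum>l\<in>{0..<?d*n}. ?D $$ (i,l) * ?B $$ (l,j))"
    using i j dD dB by (simp add: scalar_prod_def)
  also have "\<dots> = (\<Sum>l\<in>{0..<?d*n}. if l = i then sqrt (span_weight_mat es H $$ (i div n, i div n)) * ?B $$ (i,j) else 0)"
    by (rule sum.cong) (auto simp: De)
  also have "\<dots> = sqrt (span_weight_mat es H $$ (i div n, i div n)) * ?B $$ (i,j)"
    using i by simp
  also have "\<dots> = sqrt (span_weight_mat es H $$ (i div n, i div n)) * transpose_mat (kron (incidence_mat m es) (1\<^sub>m n)) $$ (i,j)"
    using i j np k v im by (simp add: kron_def span_incidence_mat_def incidence_mat_def span_weight_mat_def)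
  finally show ?thesis .
qed

lemma blk_mult_map:
  assumes "\<forall>k<d. dim_col (A k) = dim_row (B k)"
  shows "diag_block_mat (map A [0..<d]) * diag_block_mat (map B [0..<d]) = diag_block_mat (map (\<lambda>k. A k * B k) [0..<d])"
  apply (subst diag_block_mult) apply (simp only: length_map) using assms apply (simp) apply (simp only: map2_map_same) done

theorem lemma9:
  fixes m n d p :: nat
    and es :: "(nat \<times> nat) list"
    and Cs :: "nat \<Rightarrow> real mat"
    and Gs :: "nat \<Rightarrow> (nat \<times> nat) set"
  assumes arcs_len: "length es = d"
    and arcs_distinct: "distinct es"
    and arcs_valid: "\<forall>(j, i) \<in> set es. j < m \<and> i < m \<and> j \<noteq> i"
    and G_symmetric: "\<forall>(j, i) \<in> set es. (i, j) \<in> set es"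
    and C_cols: "\<forall>k < d. dim_col (Cs k) = n"
    and sub_spanning: "\<forall>q < p. Gs q \<subseteq> set es"
    and sub_symmetric: "\<forall>q < p. \<forall>(j, i) \<in> Gs q. (i, j) \<in> Gs q"
    and sub_union: "(\<Union>q < p. Gs q) = set es"
  shows "mat_kernel (diag_block_mat (map Cs [0..<d])
                       * transpose_mat (kron (incidence_mat m es) (1\<^sub>m n)))
       = mat_kernel (diag_block_mat (map Cs [0..<d])
                       * mat_sum_list (d * n) (m * n)
                           (map (\<lambda>q. diag_sqrt (kron (span_weight_mat es (Gs q)) (1\<^sub>m n))
                                      * transpose_mat (kron (span_incidence_mat m es (Gs q)) (1\<^sub>m n)))
                                [0..<p]))"
  proof -
  let ?C = "diag_block_mat (map Cs [0..<d])"
  let ?A = "transpose_mat (kron (incidence_mat m es) (1\<^sub>m n))"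
  let ?T = "\<lambda>q. diag_sqrt (kron (span_weight_mat es (Gs q)) (1\<^sub>m n))
                * transpose_mat (kron (span_incidence_mat m es (Gs q)) (1\<^sub>m n))"
  let ?S = "mat_sum_list (d * n) (m * n) (map ?T [0..<p])"
  define w where "w q k = span_weight_mat es (Gs q) $$ (k,k)" for q k
  define s where "s k = (\<Sum>q<p. sqrt (w q k))" for k
  define R where "R = sum_list (map (\<lambda>k. dim_row (Cs k)) [0..<d])"
  have wnn: "w q k \<ge> 0" if "k < d" for q k
    using that arcs_len by (simp add: w_def span_weight_mat_def)
  have spos: "s k > 0" if k: "k < d" for k
  proof -
    have "es ! k \<in> set es" using k arcs_len by simp
    then obtain q where q: "q < p" "es ! k \<in> Gs q" using sub_union by auto
    have "w q k > 0" using q k arcs_len by (simp add: w_def span_weight_mat_def)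
    hence "sqrt (w q k) > 0" by simp
    moreover have "sqrt (w q k) \<le> s k" unfolding s_def
      by (rule member_le_sum) (use q wnn k in auto)
    ultimately show ?thesis by linarith
  qed
  have Acarr: "?A \<in> carrier_mat (d*n) (m*n)"
    using arcs_len by (simp add: kron_def incidence_mat_def)
  have Tcarr: "?T q \<in> carrier_mat (d*n) (m*n)" for q
  proof (rule mult_carrier_mat)
    show "diag_sqrt (kron (span_weight_mat es (Gs q)) (1\<^sub>m n)) \<in> carrier_mat (d*n) (d*n)"
      unfolding carrier_mat_def diag_sqrt_def kron_def span_weight_mat_def using arcs_len by simp
    show "transpose_mat (kron (span_incidence_mat m es (Gs q)) (1\<^sub>m n)) \<in> carrier_mat (d*n) (m*n)"
      unfolding carrier_mat_def kron_def span_incidence_mat_def using arcs_len by simp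
  qed
  define Dc where "Dc = diag_block_mat (map (\<lambda>x. x \<cdot>\<^sub>m 1\<^sub>m n) (map s [0..<d]))"
  have DcE: "Dc = mat (d*n) (d*n) (\<lambda>(i,j). if i = j then s (i div n) else 0)"
    unfolding Dc_def diag_scal
    by (rule eq_matI) (auto simp: less_mult_imp_div_less)
  have Dccarr: "Dc \<in> carrier_mat (d*n) (d*n)" unfolding DcE by simp
  have S_eq: "?S = Dc * ?A"
  proof (rule eq_matI)
    fix i j assume "i < dim_row (Dc * ?A)" "j < dim_col (Dc * ?A)"
    hence i: "i < d * n" and j: "j < m * n" using Dccarr Acarr by auto
    have "?S $$ (i,j) = sum_list (map (\<lambda>A. A $$ (i,j)) (map ?T [0..<p]))"
      by (rule mat_sum_list_index(1)) (use Tcarr i j in auto)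
    also have "\<dots> = (\<Sum>q<p. ?T q $$ (i,j))"
      by (simp add: interv_sum_list_conv_sum_set_nat atLeast0LessThan)
    also have "\<dots> = (\<Sum>q<p. sqrt (w q (i div n)) * ?A $$ (i,j))"
      by (rule sum.cong) (use i j arcs_len in \<open>auto simp: w_def intro!: term_entry\<close>)
    also have "\<dots> = s (i div n) * ?A $$ (i,j)"
      unfolding s_def by (simp add: sum_distrib_right)
    also have "\<dots> = (Dc * ?A) $$ (i,j)"
    proof -
      have "(Dc * ?A) $$ (i,j) = (\<Sum>l\<in>{0..<d*n}. Dc $$ (i,l) * ?A $$ (l,j))"
        using i j Dccarr Acarr by (simp add: scalar_prod_def)
      also have "\<dots> = (\<Sum>l\<in>{0..<d*n}. if l = i then s (i div n) * ?A $$ (i,j) else 0)"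
        by (rule sum.cong) (use i in \<open>auto simp: DcE\<close>)
      also have "\<dots> = s (i div n) * ?A $$ (i,j)" using i by simp
      finally show ?thesis by simp
    qed
    finally show "?S $$ (i,j) = (Dc * ?A) $$ (i,j)" .
  next
    have Sc: "?S \<in> carrier_mat (d*n) (m*n)" by (rule mat_sum_list_carrier) (use Tcarr in auto)
    show "dim_row ?S = dim_row (Dc * ?A)" using Sc Dccarr by simp
  next
    have Sc: "?S \<in> carrier_mat (d*n) (m*n)" by (rule mat_sum_list_carrier) (use Tcarr in auto)
    show "dim_col ?S = dim_col (Dc * ?A)" using Sc Acarr by simp
  qed
  have dcols: "map dim_col (map Cs [0..<d]) = map (\<lambda>_. n) [0..<d]" using C_cols by simp
  have Ccarr: "?C \<in> carrier_mat R (d*n)"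
  proof -
    have "dim_col ?C = d*n" by (simp only: dim_diag_block_mat(2) dcols) (simp add: sum_list_triv)
    moreover have "dim_row ?C = R" unfolding R_def by (simp only: dim_diag_block_mat(1) map_map o_def)
    ultimately show ?thesis by (intro carrier_matI)
  qed
  define Dr where "Dr = diag_block_mat (map (\<lambda>k. s k \<cdot>\<^sub>m 1\<^sub>m (dim_row (Cs k))) [0..<d])"
  define Dr' where "Dr' = diag_block_mat (map (\<lambda>k. (1 / s k) \<cdot>\<^sub>m 1\<^sub>m (dim_row (Cs k))) [0..<d])"
  have Drcarr: "Dr \<in> carrier_mat R R" unfolding Dr_def R_def by (intro carrier_matI; simp only: dim_diag_block_mat map_map o_def index_smult_mat index_one_mat)
  have Dr'carr: "Dr' \<in> carrier_mat R R" unfolding Dr'_def R_def by (intro carrier_matI; simp only: dim_diag_block_mat map_map o_def index_smult_mat index_one_mat)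
  have Dc2: "Dc = diag_block_mat (map (\<lambda>k. s k \<cdot>\<^sub>m 1\<^sub>m n) [0..<d])" unfolding Dc_def by (simp add: o_def)
  have bm: "?C * diag_block_mat (map (\<lambda>k. s k \<cdot>\<^sub>m 1\<^sub>m n) [0..<d]) = diag_block_mat (map (\<lambda>k. Cs k * (s k \<cdot>\<^sub>m 1\<^sub>m n)) [0..<d])"
    by (rule blk_mult_map) (use C_cols in simp)
  have "?C * Dc = diag_block_mat (map (\<lambda>k. Cs k * (s k \<cdot>\<^sub>m 1\<^sub>m n)) [0..<d])"
    by (subst Dc2) (rule bm)
  also have "\<dots> = diag_block_mat (map (\<lambda>k. s k \<cdot>\<^sub>m Cs k) [0..<d])"
  proof -
    have "Cs k * (s k \<cdot>\<^sub>m 1\<^sub>m n) = s k \<cdot>\<^sub>m Cs k" if "k < d" for k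
    proof -
      have ck: "Cs k \<in> carrier_mat (dim_row (Cs k)) n" using C_cols that by (intro carrier_matI) blast+
      have "Cs k * (s k \<cdot>\<^sub>m 1\<^sub>m n) = s k \<cdot>\<^sub>m (Cs k * 1\<^sub>m n)"
        by (rule mult_smult_distrib[OF ck]) (rule one_carrier_mat)
      thus ?thesis by (simp only: right_mult_one_mat[OF ck])
    qed
    thus ?thesis by (intro arg_cong[where f=diag_block_mat] map_cong) auto
  qed
  also have "\<dots> = diag_block_mat (map (\<lambda>k. (s k \<cdot>\<^sub>m 1\<^sub>m (dim_row (Cs k))) * Cs k) [0..<d])"
  proof -
    have "(s k \<cdot>\<^sub>m 1\<^sub>m (dim_row (Cs k))) * Cs k = s k \<cdot>\<^sub>m Cs k" for k
    proof -
      have ck: "Cs k \<in> carrier_mat (dim_row (Cs k)) (dim_col (Cs k))" by (rule carrier_mat_triv)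
      have "(s k \<cdot>\<^sub>m 1\<^sub>m (dim_row (Cs k))) * Cs k = s k \<cdot>\<^sub>m (1\<^sub>m (dim_row (Cs k)) * Cs k)"
        by (rule mult_smult_assoc_mat[OF _ ck]) (rule one_carrier_mat)
      thus ?thesis by (simp only: left_mult_one_mat[OF ck])
    qed
    thus ?thesis by simp
  qed
  also have "\<dots> = Dr * ?C"
    unfolding Dr_def by (rule blk_mult_map[symmetric]) simp
  finally have CD: "?C * Dc = Dr * ?C" .
  have inv: "Dr' * Dr = 1\<^sub>m R"
  proof -
    have "Dr' * Dr = diag_block_mat (map (\<lambda>k. ((1 / s k) \<cdot>\<^sub>m 1\<^sub>m (dim_row (Cs k))) * (s k \<cdot>\<^sub>m 1\<^sub>m (dim_row (Cs k)))) [0..<d])"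
      unfolding Dr_def Dr'_def by (rule blk_mult_map) simp
    also have "\<dots> = diag_block_mat (map (\<lambda>k. 1\<^sub>m (dim_row (Cs k))) [0..<d])"
    proof -
      have "((1 / s k) \<cdot>\<^sub>m 1\<^sub>m r) * (s k \<cdot>\<^sub>m 1\<^sub>m r) = 1\<^sub>m r" if "k < d" for k r
      proof -
        have "((1 / s k) \<cdot>\<^sub>m 1\<^sub>m r) * (s k \<cdot>\<^sub>m 1\<^sub>m r) = (1 / s k) \<cdot>\<^sub>m (1\<^sub>m r * (s k \<cdot>\<^sub>m 1\<^sub>m r))"
          by (rule mult_smult_assoc_mat) auto
        also have "\<dots> = (1 / s k) \<cdot>\<^sub>m (s k \<cdot>\<^sub>m 1\<^sub>m r)" by simp
        also have "\<dots> = 1\<^sub>m r" using spos[OF that] by (rule_tac eq_matI) auto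
        finally show ?thesis .
      qed
      thus ?thesis by (intro arg_cong[where f=diag_block_mat] map_cong) auto
    qed
    also have "\<dots> = 1\<^sub>m R" using diag_block_one_mat[of "map Cs [0..<d]"] by (simp add: R_def o_def)
    finally show ?thesis .
  qed
  have "?C * ?S = Dr * (?C * ?A)"
  proof -
    have "?C * ?S = (?C * Dc) * ?A" unfolding S_eq
      by (rule assoc_mult_mat[symmetric, OF Ccarr Dccarr Acarr])
    also have "\<dots> = (Dr * ?C) * ?A" unfolding CD ..
    also have "\<dots> = Dr * (?C * ?A)" by (rule assoc_mult_mat[OF Drcarr Ccarr Acarr])
    finally show ?thesis .
  qed
  moreover have "mat_kernel (Dr * (?C * ?A)) = mat_kernel (?C * ?A)"
    by (rule kernel_inv[OF _ Drcarr Dr'carr inv]) (use Ccarr Acarr in auto)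
  ultimately show ?thesis by simp
qed

end
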